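(* Let $G=K_{s_1,s_2,\dots,s_n}$ be a simple complete multipartite graph with $n$ parts and let $q$ be a prime power with $q\ge n-1$. Then $\operatorname{mr}(\mathbb{F}_q,G)\le 3$.
   Context: $K_{s_1,\dots,s_n}$ is the join of independent sets of sizes $s_1,\dots,s_n$ (every two vertices in different parts adjacent, no edges inside a part). For a field $F$ and a simple graph $G$ on vertices $\{1,\dots,n\}$, $S(F,G)$ is the set of symmetric $n\times n$ matrices $A$ over $F$ with $a_{ij}\neq 0$ for $i\ne j$ iff $ij$ is an edge of $G$ (diagonal entries unrestricted), and $\operatorname{mr}(F,G)=\min\{\operatorname{rank}A: A\in S(F,G)\}$. *)

theory Defs
  imports "Jordan_Normal_Form.DL_Rank"
begin

text \<open>A graph on vertex set {0..<N} is given by an adjacency predicate E.\<close>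
definition S_mat :: "'a::field itself \<Rightarrow> nat \<Rightarrow> (nat \<Rightarrow> nat \<Rightarrow> bool) \<Rightarrow> 'a mat set" where
  "S_mat T N E = {A. A \<in> carrier_mat N N \<and> transpose_mat A = A \<and>
     (\<forall>i<N. \<forall>j<N. i \<noteq> j \<longrightarrow> (A $$ (i,j) \<noteq> 0 \<longleftrightarrow> E i j))}"

definition mr :: "'a::field itself \<Rightarrow> nat \<Rightarrow> (nat \<Rightarrow> nat \<Rightarrow> bool) \<Rightarrow> nat" where
  "mr T N E = (LEAST r. \<exists>A \<in> S_mat T N E. vec_space.rank N A = r)"

definition complete_multipartite ::
  "nat \<Rightarrow> (nat \<Rightarrow> nat \<Rightarrow> bool) \<Rightarrow> nat \<Rightarrow> (nat \<Rightarrow> nat) \<Rightarrow> bool" where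
  "complete_multipartite N E n s \<longleftrightarrow>
     (\<exists>part :: nat \<Rightarrow> nat.
        (\<forall>v<N. part v < n) \<and>
        (\<forall>i<n. card {v. v < N \<and> part v = i} = s i \<and> s i \<ge> 1) \<and>
        (\<forall>u<N. \<forall>v<N. E u v \<longleftrightarrow> part u \<noteq> part v))"

end

theory Submission
  imports Defs
begin

lemma rank3:
  fixes f1 g1 f2 g2 f3 g3 :: "nat \<Rightarrow> 'a::field"
  shows "vec_space.rank N (mat N N (\<lambda>(u,v). f1 u * g1 v + f2 u * g2 v + f3 u * g3 v)) \<le> 3"
proof -
  define A1 where "A1 = (mat N N (\<lambda>(u,v). f1 u * g1 v) :: 'a mat)"
  define A2 where "A2 = (mat N N (\<lambda>(u,v). f2 u * g2 v) :: 'a mat)"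
  define A3 where "A3 = (mat N N (\<lambda>(u,v). f3 u * g3 v) :: 'a mat)"
  have eq: "mat N N (\<lambda>(u,v). f1 u * g1 v + f2 u * g2 v + f3 u * g3 v) = A1 + A2 + A3"
    unfolding A1_def A2_def A3_def by (rule eq_matI) auto
  have c: "A1 \<in> carrier_mat N N" "A2 \<in> carrier_mat N N" "A3 \<in> carrier_mat N N"
    unfolding A1_def A2_def A3_def by auto
  have r1: "vec_space.rank N A1 \<le> 1"
    by (rule vec_space.rank_le_1_product_entries[OF c(1), of f1 g1]) (auto simp: A1_def)
  have r2: "vec_space.rank N A2 \<le> 1"
    by (rule vec_space.rank_le_1_product_entries[OF c(2), of f2 g2]) (auto simp: A2_def)
  have r3: "vec_space.rank N A3 \<le> 1"
    by (rule vec_space.rank_le_1_product_entries[OF c(3), of f3 g3]) (auto simp: A3_def)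
  have "vec_space.rank N (A1 + A2 + A3) \<le> vec_space.rank N (A1 + A2) + vec_space.rank N A3"
    by (rule vec_space.rank_subadditive) (use c in auto)
  moreover have "vec_space.rank N (A1 + A2) \<le> vec_space.rank N A1 + vec_space.rank N A2"
    by (rule vec_space.rank_subadditive) (use c in auto)
  ultimately show ?thesis using eq r1 r2 r3 by simp
qed

theorem mainTheorem18:
  fixes N n :: nat and E :: "nat \<Rightarrow> nat \<Rightarrow> bool" and s :: "nat \<Rightarrow> nat"
  assumes "complete_multipartite N E n s"
    and "n - 1 \<le> card (UNIV :: 'a set)"
  shows "mr TYPE('a::{finite,field}) N E \<le> 3"
proof -
  obtain part where pl: "\<forall>v<N. part v < n" and pE: "\<forall>u<N. \<forall>v<N. E u v \<longleftrightarrow> part u \<noteq> part v"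
    using assms(1) unfolding complete_multipartite_def by blast
  obtain e :: "nat \<Rightarrow> 'a" where e: "bij_betw e {0..<card (UNIV::'a set)} UNIV"
    using ex_bij_betw_nat_finite[of "UNIV::'a set"] by auto
  define a :: "nat \<Rightarrow> 'a" where "a i = (if i = 0 then 1 else e (i - 1))" for i
  define b :: "nat \<Rightarrow> 'a" where "b i = (if i = 0 then 0 else 1)" for i
  have nz: "a i * b j - a j * b i \<noteq> 0" if "i < n" "j < n" "i \<noteq> j" for i j
  proof -
    consider "i = 0" | "j = 0" | "i \<noteq> 0" "j \<noteq> 0" by blast
    then show ?thesis
    proof cases
      case 3
      have "i - 1 \<in> {0..<card (UNIV::'a set)}" "j - 1 \<in> {0..<card (UNIV::'a set)}"
        using that assms(2) 3 by auto
      moreover have "i - 1 \<noteq> j - 1" using 3 that by auto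
      ultimately have "e (i - 1) \<noteq> e (j - 1)" using e unfolding bij_betw_def inj_on_def by blast
      then show ?thesis using 3 by (simp add: a_def b_def)
    qed (use that in \<open>auto simp: a_def b_def\<close>)
  qed
  define \<alpha> where "\<alpha> u = a (part u)" for u
  define \<beta> where "\<beta> u = b (part u)" for u
  define A :: "'a mat" where "A = mat N N (\<lambda>(u,v). (\<alpha> u)^2 * (\<beta> v)^2 + (-2 * \<alpha> u * \<beta> u) * (\<alpha> v * \<beta> v) + (\<beta> u)^2 * (\<alpha> v)^2)"
  have Aent: "A $$ (u,v) = (\<alpha> u * \<beta> v - \<alpha> v * \<beta> u)^2" if "u < N" "v < N" for u v
    using that unfolding A_def by (simp add: power2_eq_square algebra_simps)
  have rk: "vec_space.rank N A \<le> 3" unfolding A_def by (rule rank3)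
  have "A \<in> S_mat TYPE('a) N E"
    unfolding S_mat_def
  proof (intro CollectI conjI allI impI)
    show "A \<in> carrier_mat N N" by (simp add: A_def)
    show "transpose_mat A = A"
      by (rule eq_matI) (auto simp: A_def power2_eq_square algebra_simps)
    fix i j assume ij: "i < N" "j < N" "i \<noteq> j"
    show "(A $$ (i, j) \<noteq> 0) = E i j"
    proof (cases "part i = part j")
      case True then show ?thesis using ij pE by (simp add: Aent \<alpha>_def \<beta>_def)
    next
      case False then show ?thesis using ij pE pl nz[of "part i" "part j"] by (simp add: Aent \<alpha>_def \<beta>_def)
    qed
  qed
  then have "mr TYPE('a) N E \<le> vec_space.rank N A"
    unfolding mr_def by (intro Least_le) blast
  then show ?thesis using rk by simp
qed

end
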